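(* Let $\alpha,\beta$ be sets and $\odot:\beta\times\beta\to\beta$. Calls $\mathrm{reduceByKey}(\odot,\mathit{pairRdd})$ (with pair RDDs over $\alpha\times\beta$) have deterministic outcomes if and only if calls $\mathrm{reduce}(\odot,\mathit{rdd})$ (with RDDs over $\beta$) have deterministic outcomes.
   Context: Lists are finite; $\mathbin{+\!\!+}$ is concatenation. $\mathrm{foldl}(f,b,[\,])=b$, $\mathrm{foldl}(f,b,[x_1,\dots,x_n])=f(\cdots f(f(b,x_1),x_2)\cdots,x_n)$; $\mathrm{reducel}(f,[x_1,\dots,x_n])=\mathrm{foldl}(f,x_1,[x_2,\dots,x_n])$ for nonempty lists. An RDD over $X$ is a list of lists over $X$; a pair RDD is an RDD over $\alpha\times\beta$ (key, value). A partitioning is a function $P$ sending each list $L$ to an RDD obtained by splitting $L$ into consecutive pieces $p_1,\dots,p_n$ with $p_1\mathbin{+\!\!+}\cdots\mathbin{+\!\!+}p_n=L$ and then arbitrarily permuting $[p_1,\dots,p_n]$ (for $\mathrm{reduce}$, $L$ is nonempty and all pieces are nonempty). $\mathrm{filterkey}(k,L)$ is the list of values $v$ of the pairs $(k,v)$ in $L$, in order. $\mathrm{reduce}_{\mathrm{det}}(\odot,[q_1,\dots,q_m])=\mathrm{reducel}(\odot,[\mathrm{reducel}(\odot,q_1),\dots,\mathrm{reducel}(\odot,q_m)])$; calls to $\mathrm{reduce}$ have deterministic outcomes if $\mathrm{reduce}_{\mathrm{det}}(\odot,P(L))=\mathrm{reducel}(\odot,L)$ for all nonempty $L$ over $\beta$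 and all such partitionings $P$. $\mathrm{reduceByKey}_{\mathrm{det}}(\odot,[q_1,\dots,q_m])$ is a pair RDD in which each key $k$ occurring in some $q_i$ appears exactly once, with value $\mathrm{reducel}(\odot,[c_{i_1},\dots,c_{i_r}])$, where $i_1<\dots<i_r$ are the indices $i$ with $k$ occurring in $q_i$ and $c_i=\mathrm{reducel}(\odot,\mathrm{filterkey}(k,q_i))$; $\mathrm{lookup}(k,R)$ denotes the value associated with key $k$ in the pair RDD $R$. Calls $\mathrm{reduceByKey}(\odot,\mathit{pairRdd})$ have deterministic outcomes if $\mathrm{lookup}(k,\mathrm{reduceByKey}_{\mathrm{det}}(\odot,P(L)))=\mathrm{reducel}(\odot,\mathrm{filterkey}(k,L))$ for all lists $L$ of pairs, partitionings $P$, and keys $k$ occurring in $L$. *)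

theory Defs
  imports "HOL-Library.Multiset"
begin

definition reducel :: "('b \<Rightarrow> 'b \<Rightarrow> 'b) \<Rightarrow> 'b list \<Rightarrow> 'b" where
  "reducel f xs = foldl f (hd xs) (tl xs)"

definition partitioning :: "('x list \<Rightarrow> 'x list list) \<Rightarrow> bool" where
  "partitioning P \<longleftrightarrow> (\<forall>L. \<exists>ps. concat ps = L \<and> mset (P L) = mset ps)"

definition reduce_partitioning :: "('x list \<Rightarrow> 'x list list) \<Rightarrow> bool" where
  "reduce_partitioning P \<longleftrightarrow>
     (\<forall>L. L \<noteq> [] \<longrightarrow> (\<exists>ps. concat ps = L \<and> (\<forall>p\<in>set ps. p \<noteq> []) \<and> mset (P L) = mset ps))"

definition reduce_det :: "('b \<Rightarrow> 'b \<Rightarrow> 'b) \<Rightarrow> 'b list list \<Rightarrow> 'b" where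
  "reduce_det f qs = reducel f (map (reducel f) qs)"

definition filterkey :: "'a \<Rightarrow> ('a \<times> 'b) list \<Rightarrow> 'b list" where
  "filterkey k L = map snd (filter (\<lambda>p. fst p = k) L)"

text \<open>The value associated with key k in reduceByKey_det f qs (for k occurring in some q_i).\<close>
definition lookup_reduceByKey_det :: "'a \<Rightarrow> ('b \<Rightarrow> 'b \<Rightarrow> 'b) \<Rightarrow> ('a \<times> 'b) list list \<Rightarrow> 'b" where
  "lookup_reduceByKey_det k f qs =
     reducel f (map (\<lambda>q. reducel f (filterkey k q)) (filter (\<lambda>q. k \<in> fst ` set q) qs))"

definition reduce_deterministic :: "('b \<Rightarrow> 'b \<Rightarrow> 'b) \<Rightarrow> bool" where
  "reduce_deterministic f \<longleftrightarrow>
     (\<forall>P :: 'b list \<Rightarrow> 'b list list. reduce_partitioning P \<longrightarrow>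
        (\<forall>L. L \<noteq> [] \<longrightarrow> reduce_det f (P L) = reducel f L))"

definition reduceByKey_deterministic ::
  "'a itself \<Rightarrow> ('b \<Rightarrow> 'b \<Rightarrow> 'b) \<Rightarrow> bool" where
  "reduceByKey_deterministic _ f \<longleftrightarrow>
     (\<forall>P :: ('a \<times> 'b) list \<Rightarrow> ('a \<times> 'b) list list. partitioning P \<longrightarrow>
        (\<forall>L k. k \<in> fst ` set L \<longrightarrow>
           lookup_reduceByKey_det k f (P L) = reducel f (filterkey k L)))"

end

theory Submission
  imports Defs
begin

lemma key_lemma:
  assumes det: "reduce_deterministic f"
    and c: "concat ps = L" and ne: "L \<noteq> []" and pne: "\<forall>p\<in>set ps. p \<noteq> []"
    and m: "mset qs = mset ps"
  shows "reducel f (map (reducel f) qs) = reducel f L"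
proof -
  define P where "P = (\<lambda>Lx. if Lx = L then qs else [Lx])"
  have "reduce_partitioning P"
    unfolding reduce_partitioning_def P_def
  proof (intro allI impI)
    fix Lx :: "'a list" assume "Lx \<noteq> []"
    show "\<exists>ps. concat ps = Lx \<and> (\<forall>p\<in>set ps. p \<noteq> []) \<and> mset (if Lx = L then qs else [Lx]) = mset ps"
    proof (cases "Lx = L")
      case True then show ?thesis using c pne m by auto
    next
      case False then show ?thesis using \<open>Lx \<noteq> []\<close> by (intro exI[of _ "[Lx]"]) auto
    qed
  qed
  with det ne have "reduce_det f (P L) = reducel f L" unfolding reduce_deterministic_def by blast
  then show ?thesis by (simp add: P_def reduce_det_def)
qed

lemma filterkey_concat: "filterkey k (concat ps) = concat (map (filterkey k) ps)"
  by (induction ps) (auto simp: filterkey_def)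

lemma filterkey_ne: "k \<in> fst ` set q \<Longrightarrow> filterkey k q \<noteq> []"
  by (auto simp: filterkey_def filter_empty_conv)

lemma concat_filter_key:
  "concat (map (filterkey k) (filter (\<lambda>q. k \<in> fst ` set q) ps)) = concat (map (filterkey k) ps)"
  by (induction ps) (auto simp: filterkey_def filter_empty_conv)

lemma filterkey_pair: "filterkey k (map (Pair k) q) = q"
  by (induction q) (auto simp: filterkey_def)

theorem proposition4:
  fixes f :: "'b \<Rightarrow> 'b \<Rightarrow> 'b"
  shows "reduceByKey_deterministic TYPE('a) f \<longleftrightarrow> reduce_deterministic f"
proof
  assume H: "reduceByKey_deterministic TYPE('a) f"
  show "reduce_deterministic f"
    unfolding reduce_deterministic_def
  proof (intro allI impI)
    fix P :: "'b list \<Rightarrow> 'b list list" and L :: "'b list"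
    assume RP: "reduce_partitioning P" and ne: "L \<noteq> []"
    define k0 :: 'a where "k0 = undefined"
    define P' where "P' = (\<lambda>L'. if L' \<noteq> [] \<and> (\<forall>p\<in>set L'. fst p = k0)
        then map (map (Pair k0)) (P (map snd L')) else [L'])"
    have "partitioning P'"
      unfolding partitioning_def
    proof
      fix L' :: "('a \<times> 'b) list"
      show "\<exists>ps. concat ps = L' \<and> mset (P' L') = mset ps"
      proof (cases "L' \<noteq> [] \<and> (\<forall>p\<in>set L'. fst p = k0)")
        case True
        then have "map snd L' \<noteq> []" by simp
        with RP obtain ps where ps: "concat ps = map snd L'" "mset (P (map snd L')) = mset ps"
          unfolding reduce_partitioning_def by blast
        have eq: "map (Pair k0) (map snd L') = L'" using True
          by (induction L') auto
        have c1: "concat (map (map (Pair k0)) ps) = L'"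
          by (metis map_concat ps(1) eq)
        have c2: "mset (P' L') = mset (map (map (Pair k0)) ps)"
          using True by (simp add: P'_def ps(2))
        show ?thesis using c1 c2 by blast
      next
        case False then show ?thesis by (intro exI[of _ "[L']"]) (auto simp add: P'_def)
      qed
    qed
    moreover have "k0 \<in> fst ` set (map (Pair k0) L)" using ne by (cases L) auto
    ultimately have E: "lookup_reduceByKey_det k0 f (P' (map (Pair k0) L))
        = reducel f (filterkey k0 (map (Pair k0) L))"
      using H unfolding reduceByKey_deterministic_def by blast
    obtain ps where ps: "concat ps = L" "\<forall>p\<in>set ps. p \<noteq> []" "mset (P L) = mset ps"
      using RP ne unfolding reduce_partitioning_def by blast
    have "\<forall>q\<in>set (P L). q \<noteq> []" using ps(2,3) by (metis set_mset_mset)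
    then have F: "filter (\<lambda>q. k0 \<in> fst ` set q) (map (map (Pair k0)) (P L)) = map (map (Pair k0)) (P L)"
      by (intro filter_True) (auto simp: neq_Nil_conv)
    have "P' (map (Pair k0) L) = map (map (Pair k0)) (P L)"
      using ne by (simp add: P'_def comp_def)
    with E F show "reduce_det f (P L) = reducel f L"
      by (simp add: lookup_reduceByKey_det_def filterkey_pair reduce_det_def comp_def)
  qed
next
  assume D: "reduce_deterministic f"
  show "reduceByKey_deterministic TYPE('a) f"
    unfolding reduceByKey_deterministic_def
  proof (intro allI impI)
    fix P :: "('a \<times> 'b) list \<Rightarrow> ('a \<times> 'b) list list" and L :: "('a \<times> 'b) list" and k :: 'a
    assume PP: "partitioning P" and k: "k \<in> fst ` set L"
    obtain ps where ps: "concat ps = L" "mset (P L) = mset ps"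
      using PP unfolding partitioning_def by blast
    let ?h = "\<lambda>q. k \<in> fst ` set q"
    have "reducel f (map (reducel f) (map (filterkey k) (filter ?h (P L))))
        = reducel f (filterkey k L)"
    proof (rule key_lemma[OF D])
      show "concat (map (filterkey k) (filter ?h ps)) = filterkey k L"
        by (simp add: concat_filter_key filterkey_concat flip: ps(1))
      show "filterkey k L \<noteq> []" using k by (rule filterkey_ne)
      show "\<forall>p\<in>set (map (filterkey k) (filter ?h ps)). p \<noteq> []"
        using filterkey_ne by fastforce
      show "mset (map (filterkey k) (filter ?h (P L))) = mset (map (filterkey k) (filter ?h ps))"
        by (simp add: ps(2))
    qed
    then show "lookup_reduceByKey_det k f (P L) = reducel f (filterkey k L)"
      by (simp add: lookup_reduceByKey_det_def comp_def)
  qed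
qed

end
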